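(* Let $n\geq 2$, $k>0$, $m=\lfloor n/2\rfloor$, and $a\in\mathbb{C}^{2^m}$. Let $\phi'_{a,0}$ be the Killing spinor on $(\mathbb{H}^n_{-k^2},g')$ corresponding to $a$ (described in the context). Then at every point $X\in\mathbb{H}^n_{-k^2}\subset\mathbb{R}^{n,1}$, $$|\phi'_{a,0}|^2_{g'}=-2k\,X\cdot\zeta_a,$$ where $$\zeta_a=\sum_{j=1}^n\langle\sqrt{-1}\,c(e_j)a,a\rangle e_j-\langle\sqrt{-1}\,c(e_0)a,a\rangle e_0=\sum_{j=1}^n\langle\sqrt{-1}\,c(e_j)a,a\rangle e_j+|a|^2e_0 .$$
   Context: $\mathbb{R}^{n,1}$ is Minkowski space with orthonormal basis $e_1=\partial/\partial x_1,\dots,e_n=\partial/\partial x_n$, $e_0=\partial/\partial t$, metric $\sum dx_i^2-dt^2$ and Lorentz inner product "$\cdot$". $\mathbb{H}^n_{-k^2}=\{X=(x_1,\dots,x_n,t):\sum x_i^2-t^2=-1/k^2,\ t>0\}$ with induced metric $g'$. $\langle\cdot,\cdot\rangle$ is the standard Hermitian inner product on $\mathbb{C}^{2^m}$, $c(e_j)$ ($1\le j\le n$) are Baum's Clifford matrices (complex $2^m\times2^m$ matrices with $c(e_i)c(e_j)+c(e_j)c(e_i)=-2\delta_{ij}I$, built from $g_1=\begin{pmatrix}\sqrt{-1}&0\\0&-\sqrt{-1}\end{pmatrix}$, $g_2=\begin{pmatrix}0&\sqrt{-1}\\\sqrt{-1}&0\end{pmatrix}$, $T=\begin{pmatrix}0&-\sqrt{-1}\\\sqrt{-1}&0\end{pmatrix}$,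 $E=I_2$ by $c(e_{2j-1})=E\otimes\cdots\otimes E\otimes g_1\otimes T\otimes\cdots\otimes T$, $c(e_{2j})=E\otimes\cdots\otimes E\otimes g_2\otimes T\otimes\cdots\otimes T$ ($j-1$ factors $E$, $m$ factors total), and, if $n=2m+1$, $c(e_n)=\sqrt{-1}\,T\otimes\cdots\otimes T$), and $c(e_0):=\sqrt{-1}I$. A Killing spinor is a spinor field $\phi'$ with $\nabla'_V\phi'+\frac{\sqrt{-1}}{2}k\,c'(V)\phi'=0$ for all $V$, $\nabla'$ the spin connection and $c'$ Clifford multiplication of $g'$. By Baum, the Killing spinors are parametrized by $a\in\mathbb{C}^{2^m}$: in the ball model $x\in\{|x|<1/k\}\subset\mathbb{R}^n$ with metric $4|dx|^2/(1-k^2|x|^2)^2$, identified with the hyperboloid via $X=\big(\tfrac{2x}{1-k^2|x|^2},\tfrac{1+k^2|x|^2}{k(1-k^2|x|^2)}\big)$, and with the spinor bundle trivialized, $\phi'_{a,0}(x)=\sqrt{\tfrac{2}{1-k^2|x|^2}}\big(a-\sqrt{-1}\,k\,c(x)a\big)$, where $c(x)=\sum_j x_jc(e_j)$ (for $k=1$ this is Baum's formula $\sqrt{2/(1-|x|^2)}(a-\sqrt{-1}c(x)a)$). *)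

theory Defs
  imports Complex_Main
begin

text \<open>Complex square matrices of size N x N are represented as functions
  nat => nat => complex (only entries with indices < N matter);
  vectors in C^N as functions nat => complex (only indices < N matter).\<close>

type_synonym cmat = "nat \<Rightarrow> nat \<Rightarrow> complex"
type_synonym cvec = "nat \<Rightarrow> complex"

definition g1 :: cmat where
  "g1 i j = (if i = 0 \<and> j = 0 then \<i> else if i = 1 \<and> j = 1 then - \<i> else 0)"

definition g2 :: cmat where
  "g2 i j = (if (i = 0 \<and> j = 1) \<or> (i = 1 \<and> j = 0) then \<i> else 0)"

definition Tm :: cmat where
  "Tm i j = (if i = 0 \<and> j = 1 then - \<i> else if i = 1 \<and> j = 0 then \<i> else 0)"

definition Em :: cmat where
  "Em i j = (if i = j then 1 else 0)"

definition kron2 :: "cmat \<Rightarrow> nat \<Rightarrow> cmat \<Rightarrow> cmat" where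
  "kron2 A r B i j = A (i div 2^r) (j div 2^r) * B (i mod 2^r) (j mod 2^r)"

fun tens :: "cmat list \<Rightarrow> cmat" where
  "tens [] = (\<lambda>i j. if i = 0 \<and> j = 0 then 1 else 0)"
| "tens (A # As) = kron2 A (length As) (tens As)"

text \<open>Baum's Clifford matrices c(e_j), 1 <= j <= n, of size 2^m, m = n div 2.\<close>
definition cliff :: "nat \<Rightarrow> nat \<Rightarrow> cmat" where
  "cliff n j = (let m = n div 2 in
     if 1 \<le> j \<and> j \<le> 2 * m then
       (let l = (j + 1) div 2 in
        tens (replicate (l - 1) Em @ [if odd j then g1 else g2] @ replicate (m - l) Tm))
     else if odd n \<and> j = n then (\<lambda>a b. \<i> * tens (replicate m Tm) a b)
     else (\<lambda>_ _. 0))"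

definition cliff0 :: "nat \<Rightarrow> cmat" where
  "cliff0 n i j = (if i = j then \<i> else 0)"

definition mvec :: "nat \<Rightarrow> cmat \<Rightarrow> cvec \<Rightarrow> cvec" where
  "mvec N M v i = (\<Sum>l<N. M i l * v l)"

text \<open>Standard Hermitian inner product on C^N (linear in the first slot).\<close>
definition herm :: "nat \<Rightarrow> cvec \<Rightarrow> cvec \<Rightarrow> complex" where
  "herm N u v = (\<Sum>i<N. u i * cnj (v i))"

text \<open>Points x of R^n as functions nat => real, coordinates x_1..x_n.\<close>
definition sqnorm :: "nat \<Rightarrow> (nat \<Rightarrow> real) \<Rightarrow> real" where
  "sqnorm n x = (\<Sum>j=1..n. (x j)^2)"

definition cliffx :: "nat \<Rightarrow> (nat \<Rightarrow> real) \<Rightarrow> cmat" where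
  "cliffx n x i l = (\<Sum>j=1..n. complex_of_real (x j) * cliff n j i l)"

text \<open>Killing spinor phi'_{a,0} in the ball model with trivialized spinor bundle.\<close>
definition killing_spinor :: "nat \<Rightarrow> real \<Rightarrow> cvec \<Rightarrow> (nat \<Rightarrow> real) \<Rightarrow> cvec" where
  "killing_spinor n k a x i =
     complex_of_real (sqrt (2 / (1 - k^2 * sqnorm n x))) *
       (a i - \<i> * complex_of_real k * mvec (2 ^ (n div 2)) (cliffx n x) a i)"

text \<open>Pointwise squared length |phi|^2_{g'} (orthonormal trivialization).\<close>
definition spinor_sqnorm :: "nat \<Rightarrow> cvec \<Rightarrow> real" where
  "spinor_sqnorm n phi = (\<Sum>i<2 ^ (n div 2). (cmod (phi i))^2)"

text \<open>Hyperboloid point X = (X_1..X_n, t) corresponding to ball point x.\<close>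
definition hyp_space :: "nat \<Rightarrow> real \<Rightarrow> (nat \<Rightarrow> real) \<Rightarrow> nat \<Rightarrow> real" where
  "hyp_space n k x j = 2 * x j / (1 - k^2 * sqnorm n x)"

definition hyp_time :: "nat \<Rightarrow> real \<Rightarrow> (nat \<Rightarrow> real) \<Rightarrow> real" where
  "hyp_time n k x = (1 + k^2 * sqnorm n x) / (k * (1 - k^2 * sqnorm n x))"

definition zeta_sp :: "nat \<Rightarrow> cvec \<Rightarrow> nat \<Rightarrow> complex" where
  "zeta_sp n a j = herm (2 ^ (n div 2)) (mvec (2 ^ (n div 2)) (\<lambda>p q. \<i> * cliff n j p q) a) a"

definition zeta_t :: "nat \<Rightarrow> cvec \<Rightarrow> complex" where
  "zeta_t n a = - herm (2 ^ (n div 2)) (mvec (2 ^ (n div 2)) (\<lambda>p q. \<i> * cliff0 n p q) a) a"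

definition lorentz_zeta :: "nat \<Rightarrow> real \<Rightarrow> (nat \<Rightarrow> real) \<Rightarrow> cvec \<Rightarrow> complex" where
  "lorentz_zeta n k x a =
     (\<Sum>j=1..n. complex_of_real (hyp_space n k x j) * zeta_sp n a j)
     - complex_of_real (hyp_time n k x) * zeta_t n a"

end

theory Submission
  imports Defs
begin


fun tf :: "nat \<Rightarrow> (nat \<Rightarrow> cmat) \<Rightarrow> cmat" where
  "tf 0 F = (\<lambda>i j. if i = 0 \<and> j = 0 then 1 else 0)"
| "tf (Suc m) F = kron2 (F 0) m (tf m (\<lambda>t. F (Suc t)))"

lemma tens_map: "tens (map F [0..<m]) = tf m F"
proof (induction m arbitrary: F)
  case 0 then show ?case by simp
next
  case (Suc m)
  have "map F [0..<Suc m] = F 0 # map (\<lambda>t. F (Suc t)) [0..<m]"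
    by (rule nth_equalityI) (auto simp: nth_Cons' simp del: upt_Suc split: nat.split)
  then show ?case using Suc[of "\<lambda>t. F (Suc t)"] by simp
qed

definition mm2 :: "cmat \<Rightarrow> cmat \<Rightarrow> cmat" where
  "mm2 A B i j = (\<Sum>l<2. A i l * B l j)"

lemma mm2_two: "mm2 A B i j = A i 0 * B 0 j + A i 1 * B 1 j"
  by (simp add: mm2_def numeral_2_eq_2)

lemma sum_split2: "(\<Sum>l<2*R. f l) = (\<Sum>l<R. f l) + (\<Sum>l<R. f (R + l)) " for R :: nat
proof -
  have e: "{..<2*R} = {..<R} \<union> {R..<2*R}" by auto
  have "(\<Sum>l<2*R. f l) = sum f ({..<R} \<union> {R..<2*R})" by (simp only: e)
  also have "\<dots> = (\<Sum>l<R. f l) + (\<Sum>l\<in>{R..<2*R}. f l)"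
    by (rule sum.union_disjoint) auto
  also have "(\<Sum>l\<in>{R..<2*R}. f l) = (\<Sum>l<R. f (R + l))"
  proof -
    have "(\<Sum>l\<in>{R..<2*R}. f l) = (\<Sum>l\<in>{0+R..<R+R}. f l)" by (simp add: mult_2)
    also have "\<dots> = (\<Sum>l\<in>{0..<R}. f (l + R))" by (rule sum.shift_bounds_nat_ivl)
    finally show ?thesis by (simp add: lessThan_atLeast0 add.commute)
  qed
  finally show ?thesis .
qed

lemma tf_mult:
  assumes "i < 2^m" "j < 2^m"
  shows "(\<Sum>l<2^m. tf m F i l * tf m G l j) = tf m (\<lambda>t. mm2 (F t) (G t)) i j"
  using assms
proof (induction m arbitrary: F G i j)
  case 0 then show ?case by simp
next
  case (Suc m)
  define R :: nat where "R = 2^m"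
  have R: "R > 0" by (simp add: R_def)
  let ?F = "\<lambda>t. F (Suc t)" and ?G = "\<lambda>t. G (Suc t)"
  have "(\<Sum>l<2^Suc m. tf (Suc m) F i l * tf (Suc m) G l j)
     = (\<Sum>l<2*R. F 0 (i div R) (l div R) * tf m ?F (i mod R) (l mod R) *
          (G 0 (l div R) (j div R) * tf m ?G (l mod R) (j mod R)))"
    by (simp add: kron2_def R_def)
  also have "\<dots> = (\<Sum>l<R. F 0 (i div R) 0 * tf m ?F (i mod R) l *
          (G 0 0 (j div R) * tf m ?G l (j mod R)))
     + (\<Sum>l<R. F 0 (i div R) 1 * tf m ?F (i mod R) l *
          (G 0 1 (j div R) * tf m ?G l (j mod R)))"
    by (simp add: sum_split2 R)
  also have "\<dots> = F 0 (i div R) 0 * G 0 0 (j div R) * (\<Sum>l<R. tf m ?F (i mod R) l * tf m ?G l (j mod R))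
     + F 0 (i div R) 1 * G 0 1 (j div R) * (\<Sum>l<R. tf m ?F (i mod R) l * tf m ?G l (j mod R))"
    by (simp add: sum_distrib_left mult_ac)
  also have "(\<Sum>l<R. tf m ?F (i mod R) l * tf m ?G l (j mod R)) = tf m (\<lambda>t. mm2 (?F t) (?G t)) (i mod R) (j mod R)"
    unfolding R_def by (rule Suc.IH) auto
  finally show ?case by (simp add: kron2_def R_def mm2_two[of "F 0"] algebra_simps)
qed

lemma tf_cong:
  assumes "\<And>t a b. t < m \<Longrightarrow> a < 2 \<Longrightarrow> b < 2 \<Longrightarrow> F t a b = G t a b" "i < 2^m" "j < 2^m"
  shows "tf m F i j = tf m G i j"
  using assms
proof (induction m arbitrary: F G i j)
  case 0 then show ?case by simp
next
  case (Suc m)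
  have "i div 2^m < 2" "j div 2^m < 2" using Suc.prems
    by (simp_all add: less_mult_imp_div_less mult.commute)
  moreover have "tf m (\<lambda>t. F (Suc t)) (i mod 2^m) (j mod 2^m) = tf m (\<lambda>t. G (Suc t)) (i mod 2^m) (j mod 2^m)"
    by (rule Suc.IH) (auto intro: Suc.prems)
  ultimately show ?case using Suc.prems(1)[of 0] by (simp add: kron2_def)
qed

lemma tf_scale:
  assumes "s < m"
  shows "tf m (\<lambda>t. if t = s then (\<lambda>a b. c * F t a b) else F t) i j = c * tf m F i j"
  using assms
proof (induction m arbitrary: F s i j)
  case 0 then show ?case by simp
next
  case (Suc m)
  show ?case
  proof (cases s)
    case 0 then show ?thesis by (simp add: kron2_def)
  next
    case (Suc s')
    then have "s' < m" using Suc.prems by simp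
    from Suc.IH[OF this, of "\<lambda>t. F (Suc t)"] show ?thesis using Suc by (simp add: kron2_def)
  qed
qed

lemma tf_id:
  assumes "i < 2^m" "j < 2^m"
  shows "tf m (\<lambda>_. Em) i j = (if i = j then 1 else 0)"
  using assms
proof (induction m arbitrary: i j)
  case 0 then show ?case by simp
next
  case (Suc m)
  have "i mod 2^m < 2^m" "j mod 2^m < 2^m" by simp_all
  note ih = Suc.IH[OF this]
  have "i = j \<longleftrightarrow> i div 2^m = j div 2^m \<and> i mod 2^m = j mod 2^m"
    by (metis div_mult_mod_eq)
  then show ?case using ih by (simp add: kron2_def Em_def)
qed

lemma tf_adj: "cnj (tf m F i j) = tf m (\<lambda>t a b. cnj (F t b a)) j i"
proof (induction m arbitrary: F i j)
  case 0 then show ?case by simp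
next
  case (Suc m)
  then show ?case by (simp add: kron2_def)
qed


definition eq2 :: "cmat \<Rightarrow> cmat \<Rightarrow> bool" where
  "eq2 X Y \<longleftrightarrow> (\<forall>a<2. \<forall>b<2. X a b = Y a b)"

lemma less2_cases: "a < (2::nat) \<Longrightarrow> a = 0 \<or> a = 1" by auto

lemma tf_anti:
  assumes "s < m" and "\<And>t. t < m \<Longrightarrow> t \<noteq> s \<Longrightarrow> eq2 (mm2 (F t) (G t)) (mm2 (G t) (F t))"
    and "eq2 (mm2 (F s) (G s)) (\<lambda>a b. - mm2 (G s) (F s) a b)"
    and "p < 2^m" "q < 2^m"
  shows "tf m (\<lambda>t. mm2 (F t) (G t)) p q = - tf m (\<lambda>t. mm2 (G t) (F t)) p q"
proof -
  have "tf m (\<lambda>t. mm2 (F t) (G t)) p q =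
        tf m (\<lambda>t. if t = s then (\<lambda>a b. (-1) * mm2 (G t) (F t) a b) else mm2 (G t) (F t)) p q"
    by (rule tf_cong) (use assms in \<open>auto simp: eq2_def\<close>)
  also have "\<dots> = - tf m (\<lambda>t. mm2 (G t) (F t)) p q"
    using tf_scale[OF assms(1)] by simp
  finally show ?thesis .
qed

lemma eq2_E_left: "eq2 (mm2 Em X) X"
  unfolding eq2_def by (auto simp: mm2_two Em_def dest!: less2_cases)
lemma eq2_E_right: "eq2 (mm2 X Em) X"
  unfolding eq2_def by (auto simp: mm2_two Em_def dest!: less2_cases)

lemma comm_E1: "eq2 (mm2 Em X) (mm2 X Em)"
  using eq2_E_left eq2_E_right unfolding eq2_def by simp
lemma comm_E2: "eq2 (mm2 X Em) (mm2 Em X)"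
  using eq2_E_left eq2_E_right unfolding eq2_def by simp
lemma comm_same: "eq2 (mm2 X X) (mm2 X X)"
  unfolding eq2_def by simp

definition basic :: "cmat \<Rightarrow> bool" where
  "basic X \<longleftrightarrow> X = Tm \<or> X = g1 \<or> X = g2"

lemma anti_basic:
  assumes "basic X" "basic Y" "X \<noteq> Y"
  shows "eq2 (mm2 X Y) (\<lambda>a b. - mm2 Y X a b)"
  using assms unfolding basic_def eq2_def
  by (auto simp: mm2_two Tm_def g1_def g2_def dest!: less2_cases)

lemma sq_basic:
  "eq2 (mm2 Tm Tm) Em" "eq2 (mm2 g1 g1) (\<lambda>a b. - Em a b)" "eq2 (mm2 g2 g2) (\<lambda>a b. - Em a b)"
  unfolding eq2_def
  by (auto simp: mm2_two Tm_def g1_def g2_def Em_def dest!: less2_cases)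

lemma g_ne: "g1 \<noteq> g2" "g1 \<noteq> Tm" "g2 \<noteq> Tm" "g1 \<noteq> Em" "g2 \<noteq> Em" "Tm \<noteq> Em"
proof -
  have "g1 0 0 \<noteq> g2 0 0" "g1 0 0 \<noteq> Tm 0 0" "g2 0 1 \<noteq> Tm 0 1" "g1 0 0 \<noteq> Em 0 0"
       "g2 0 0 \<noteq> Em 0 0" "Tm 0 0 \<noteq> Em 0 0"
    by (simp_all add: g1_def g2_def Tm_def Em_def)
  then show "g1 \<noteq> g2" "g1 \<noteq> Tm" "g2 \<noteq> Tm" "g1 \<noteq> Em" "g2 \<noteq> Em" "Tm \<noteq> Em" by auto
qed

lemma tf_anti2:
  assumes "s < m" and "\<And>t. t < m \<Longrightarrow> t \<noteq> s \<Longrightarrow> F t = Em \<or> G t = Em \<or> F t = G t"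
    and "basic (F s)" "basic (G s)" "F s \<noteq> G s"
    and "p < 2^m" "q < 2^m"
  shows "tf m (\<lambda>t. mm2 (F t) (G t)) p q = - tf m (\<lambda>t. mm2 (G t) (F t)) p q"
proof (rule tf_anti[OF assms(1) _ _ assms(6,7)])
  fix t assume "t < m" "t \<noteq> s"
  then show "eq2 (mm2 (F t) (G t)) (mm2 (G t) (F t))"
    using assms(2) comm_E1 comm_E2 comm_same by metis
next
  show "eq2 (mm2 (F s) (G s)) (\<lambda>a b. - mm2 (G s) (F s) a b)"
    using anti_basic assms(3-5) by blast
qed

definition CF :: "nat \<Rightarrow> nat \<Rightarrow> nat \<Rightarrow> cmat" where
  "CF n j t = (if j \<le> 2 * (n div 2) then
     (if t < (j+1) div 2 - 1 then Em else if t = (j+1) div 2 - 1 then (if odd j then g1 else g2) else Tm)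
     else Tm)"

definition CS :: "nat \<Rightarrow> nat \<Rightarrow> complex" where
  "CS n j = (if j \<le> 2 * (n div 2) then 1 else \<i>)"

lemma cliff_tf:
  assumes "1 \<le> j" "j \<le> n"
  shows "cliff n j p q = CS n j * tf (n div 2) (CF n j) p q"
proof (cases "j \<le> 2 * (n div 2)")
  case True
  define l where "l = (j + 1) div 2"
  have l: "1 \<le> l" "l \<le> n div 2" using True assms by (auto simp: l_def)
  have "replicate (l - 1) Em @ [if odd j then g1 else g2] @ replicate (n div 2 - l) Tm
        = map (CF n j) [0..<n div 2]"
    by (rule nth_equalityI) (use l True in \<open>auto simp: nth_append CF_def l_def\<close>)
  then show ?thesis using True assms
    by (simp add: cliff_def Let_def l_def CS_def tens_map)
next
  case False
  then have "odd n" "j = n" using assms by auto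
  moreover have "replicate (n div 2) Tm = map (\<lambda>_. Tm) [0..<n div 2]"
    by (simp add: map_replicate_const)
  moreover have "CF n j = (\<lambda>_. Tm)" using False by (auto simp: CF_def)
  ultimately show ?thesis using False assms
    by (simp add: cliff_def Let_def CS_def tens_map)
qed


lemma CF_lt: "j \<le> 2 * (n div 2) \<Longrightarrow> t < (j+1) div 2 - 1 \<Longrightarrow> CF n j t = Em"
  by (simp add: CF_def)
lemma CF_gt: "j \<le> 2 * (n div 2) \<Longrightarrow> t > (j+1) div 2 - 1 \<Longrightarrow> CF n j t = Tm"
  by (simp add: CF_def)
lemma CF_big: "\<not> j \<le> 2 * (n div 2) \<Longrightarrow> CF n j t = Tm"
  by (simp add: CF_def)
lemma CF_at': "j \<le> 2 * (n div 2) \<Longrightarrow> t = (j+1) div 2 - 1 \<Longrightarrow> CF n j t = (if odd j then g1 else g2)"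
  by (simp add: CF_def)
lemma basic_simps: "basic Tm" "basic g1" "basic g2" "basic (if b then g1 else g2)"
  by (auto simp: basic_def)

lemma CF_cond_lt:
  assumes "1 \<le> j" "j < j'" "j' \<le> n"
  shows "\<exists>s < n div 2. (\<forall>t. t < n div 2 \<longrightarrow> t \<noteq> s \<longrightarrow>
            CF n j t = Em \<or> CF n j' t = Em \<or> CF n j t = CF n j' t)
         \<and> basic (CF n j s) \<and> basic (CF n j' s) \<and> CF n j s \<noteq> CF n j' s"
proof (cases "j' \<le> 2 * (n div 2)")
  case True
  define l where "l = (j + 1) div 2 - 1"
  define l' where "l' = (j' + 1) div 2 - 1"
  have T1: "j \<le> 2 * (n div 2)" using True assms by simp
  note T2 = True
  have ll: "l \<le> l'" "l' < n div 2" using assms True by (auto simp: l_def l'_def)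
  show ?thesis
  proof (cases "l < l'")
    case True2: True
    have a1: "CF n j l' = Tm" using CF_gt[OF T1, of l'] True2 by (simp add: l_def)
    have a2: "CF n j' l' = (if odd j' then g1 else g2)" using CF_at'[OF True] by (simp add: l'_def)
    have a3: "CF n j t = Em \<or> CF n j' t = Em \<or> CF n j t = CF n j' t" if "t \<noteq> l'" for t
    proof (cases "t < l'")
      case True then show ?thesis using CF_lt[OF T2, of t] by (simp add: l'_def)
    next
      case False
      then have "t > l'" "t > l" using that True2 by auto
      then show ?thesis using CF_gt[OF T1, of t] CF_gt[OF T2, of t] by (simp add: l_def l'_def)
    qed
    show ?thesis
      by (rule exI[of _ l']) (use ll a1 a2 a3 g_ne basic_simps in auto)
  next
    case False
    then have "l = l'" using ll by simp
    then have oj: "odd j" "even j'" using assms unfolding l_def l'_def by presburger+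
    have a1: "CF n j l = g1" using CF_at'[OF T1] oj by (simp add: l_def)
    have a2: "CF n j' l = g2" using CF_at'[OF True] oj \<open>l = l'\<close> by (simp add: l'_def)
    have a3: "CF n j t = CF n j' t" if "t \<noteq> l" for t
    proof (cases "t < l")
      case True then show ?thesis using CF_lt[OF T1, of t] CF_lt[OF T2, of t] \<open>l = l'\<close>
        by (simp add: l_def l'_def)
    next
      case False
      then have "t > l" using that by auto
      then show ?thesis using CF_gt[OF T1, of t] CF_gt[OF T2, of t] \<open>l = l'\<close>
        by (simp add: l_def l'_def)
    qed
    show ?thesis
      by (rule exI[of _ l]) (use ll \<open>l = l'\<close> a1 a2 a3 g_ne basic_simps in auto)
  qed
next
  case False
  note F2 = False
  define l where "l = (j + 1) div 2 - 1"
  have T1: "j \<le> 2 * (n div 2)" using False assms by auto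
  have ln: "l < n div 2" using T1 assms by (auto simp: l_def)
  have a1: "CF n j l = (if odd j then g1 else g2)" using CF_at'[OF T1] by (simp add: l_def)
  have a3: "CF n j t = Em \<or> CF n j' t = Em \<or> CF n j t = CF n j' t" if "t \<noteq> l" for t
  proof (cases "t < l")
    case True then show ?thesis using CF_lt[OF T1, of t] by (simp add: l_def)
  next
    case False
    then have "t > l" using that by auto
    then show ?thesis using CF_gt[OF T1, of t] CF_big[OF F2] by (simp add: l_def)
  qed
  show ?thesis
    by (rule exI[of _ l]) (use ln a1 a3 CF_big[OF F2] g_ne basic_simps in auto)
qed

lemma CF_cond:
  assumes "1 \<le> j" "1 \<le> j'" "j \<noteq> j'" "j \<le> n" "j' \<le> n"
  shows "\<exists>s < n div 2. (\<forall>t. t < n div 2 \<longrightarrow> t \<noteq> s \<longrightarrow>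
            CF n j t = Em \<or> CF n j' t = Em \<or> CF n j t = CF n j' t)
         \<and> basic (CF n j s) \<and> basic (CF n j' s) \<and> CF n j s \<noteq> CF n j' s"
proof (cases "j < j'")
  case True then show ?thesis using CF_cond_lt assms by blast
next
  case False
  then have "j' < j" using assms by simp
  from CF_cond_lt[OF assms(2) this assms(4)] show ?thesis by metis
qed

lemma cliff_prod:
  assumes "1 \<le> j" "j \<le> n" "1 \<le> j'" "j' \<le> n" "p < 2^(n div 2)" "q < 2^(n div 2)"
  shows "(\<Sum>l<2^(n div 2). cliff n j p l * cliff n j' l q)
       = CS n j * CS n j' * tf (n div 2) (\<lambda>t. mm2 (CF n j t) (CF n j' t)) p q"
proof -
  have "(\<Sum>l<2^(n div 2). cliff n j p l * cliff n j' l q)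
      = CS n j * CS n j' * (\<Sum>l<2^(n div 2). tf (n div 2) (CF n j) p l * tf (n div 2) (CF n j') l q)"
    using assms by (simp add: cliff_tf sum_distrib_left mult_ac)
  then show ?thesis using tf_mult assms by simp
qed

lemma CF_at: "j \<le> 2 * (n div 2) \<Longrightarrow> CF n j ((j+1) div 2 - 1) = (if odd j then g1 else g2)"
  by (simp add: CF_def)

lemma CF_off: "j \<le> 2 * (n div 2) \<Longrightarrow> t \<noteq> (j+1) div 2 - 1 \<Longrightarrow> CF n j t = Em \<or> CF n j t = Tm"
  by (simp add: CF_def)

lemma cliff_anti:
  assumes "1 \<le> j" "j \<le> n" "1 \<le> j'" "j' \<le> n" "j \<noteq> j'" "p < 2^(n div 2)" "q < 2^(n div 2)"
  shows "(\<Sum>l<2^(n div 2). cliff n j p l * cliff n j' l q)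
       = - (\<Sum>l<2^(n div 2). cliff n j' p l * cliff n j l q)"
proof -
  obtain s where s: "s < n div 2" "\<And>t. t < n div 2 \<Longrightarrow> t \<noteq> s \<Longrightarrow>
            CF n j t = Em \<or> CF n j' t = Em \<or> CF n j t = CF n j' t"
     "basic (CF n j s)" "basic (CF n j' s)" "CF n j s \<noteq> CF n j' s"
    using CF_cond[of j j' n] assms by blast
  have "tf (n div 2) (\<lambda>t. mm2 (CF n j t) (CF n j' t)) p q = - tf (n div 2) (\<lambda>t. mm2 (CF n j' t) (CF n j t)) p q"
    using tf_anti2[of s "n div 2" "CF n j" "CF n j'" p q] s assms(6,7) by blast
  moreover have "(\<Sum>l<2^(n div 2). cliff n j p l * cliff n j' l q)
       = CS n j * CS n j' * tf (n div 2) (\<lambda>t. mm2 (CF n j t) (CF n j' t)) p q"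
    by (rule cliff_prod) (use assms in auto)
  moreover have "(\<Sum>l<2^(n div 2). cliff n j' p l * cliff n j l q)
       = CS n j' * CS n j * tf (n div 2) (\<lambda>t. mm2 (CF n j' t) (CF n j t)) p q"
    by (rule cliff_prod) (use assms in auto)
  ultimately show ?thesis by (simp add: mult_ac)
qed

lemma cliff_sq:
  assumes "1 \<le> j" "j \<le> n" "p < 2^(n div 2)" "q < 2^(n div 2)"
  shows "(\<Sum>l<2^(n div 2). cliff n j p l * cliff n j l q) = - (if p = q then 1 else 0)"
proof (cases "j \<le> 2 * (n div 2)")
  case True
  define s where "s = (j + 1) div 2 - 1"
  have s: "s < n div 2" using True assms by (auto simp: s_def)
  have "tf (n div 2) (\<lambda>t. mm2 (CF n j t) (CF n j t)) p q
      = tf (n div 2) (\<lambda>t. if t = s then (\<lambda>a b. (-1) * Em a b) else Em) p q"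
  proof (rule tf_cong[OF _ assms(3,4)])
    fix t a b :: nat assume "t < n div 2" "a < 2" "b < 2"
    then show "mm2 (CF n j t) (CF n j t) a b = (if t = s then (\<lambda>a b. (-1) * Em a b) else Em) a b"
      using sq_basic eq2_E_left[of Em] True CF_at[OF True] CF_off[OF True, of t]
      unfolding s_def eq2_def by (cases "t = (j+1) div 2 - 1") auto
  qed
  also have "\<dots> = - (if p = q then 1 else 0)"
    using tf_scale[OF s, where c="-1" and F="\<lambda>_. Em"] tf_id[OF assms(3,4)] by simp
  finally show ?thesis using assms True by (simp add: cliff_prod CS_def)
next
  case False
  have "tf (n div 2) (\<lambda>t. mm2 (CF n j t) (CF n j t)) p q = tf (n div 2) (\<lambda>_. Em) p q"
    by (rule tf_cong[OF _ assms(3,4)]) (use sq_basic False in \<open>auto simp: CF_def eq2_def\<close>)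
  then show ?thesis using assms False tf_id[OF assms(3,4)] by (simp add: cliff_prod CS_def)
qed

lemma cliff_skew:
  assumes "1 \<le> j" "j \<le> n" "p < 2^(n div 2)" "q < 2^(n div 2)"
  shows "cnj (cliff n j q p) = - cliff n j p q"
proof (cases "j \<le> 2 * (n div 2)")
  case True
  define s where "s = (j + 1) div 2 - 1"
  have s: "s < n div 2" using True assms by (auto simp: s_def)
  have "tf (n div 2) (\<lambda>t a b. cnj (CF n j t b a)) p q
      = tf (n div 2) (\<lambda>t. if t = s then (\<lambda>a b. (-1) * CF n j t a b) else CF n j t) p q"
  proof (rule tf_cong[OF _ assms(3,4)])
    fix t a b :: nat assume "t < n div 2" "a < 2" "b < 2"
    then show "cnj (CF n j t b a) = (if t = s then (\<lambda>a b. (-1) * CF n j t a b) else CF n j t) a b"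
      using CF_at[OF True] CF_off[OF True, of t] unfolding s_def
      by (cases "t = (j+1) div 2 - 1")
        (auto simp: Em_def Tm_def g1_def g2_def dest!: less2_cases)
  qed
  also have "\<dots> = - tf (n div 2) (CF n j) p q"
    using tf_scale[OF s, where c="-1" and F="CF n j"] by simp
  finally show ?thesis using assms True by (simp add: cliff_tf CS_def tf_adj)
next
  case False
  have "tf (n div 2) (\<lambda>t a b. cnj (CF n j t b a)) p q = tf (n div 2) (CF n j) p q"
    by (rule tf_cong[OF _ assms(3,4)]) (use False in \<open>auto simp: CF_def Tm_def dest!: less2_cases\<close>)
  then show ?thesis using assms False by (simp add: cliff_tf CS_def tf_adj)
qed




lemma C_skew:
  assumes "p < 2^(n div 2)" "q < 2^(n div 2)"
  shows "cnj (cliffx n x q p) = - cliffx n x p q"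
proof -
  have "cnj (cliffx n x q p) = (\<Sum>j=1..n. complex_of_real (x j) * cnj (cliff n j q p))"
    by (simp add: cliffx_def)
  also have "\<dots> = (\<Sum>j=1..n. - (complex_of_real (x j) * cliff n j p q))"
    by (rule sum.cong) (use assms cliff_skew in auto)
  also have "\<dots> = - cliffx n x p q" by (simp add: cliffx_def sum_negf)
  finally show ?thesis .
qed

lemma sym_sum:
  fixes w :: "nat \<Rightarrow> nat \<Rightarrow> complex"
  assumes "\<And>i j. w i j = w j i" "finite I"
  shows "2 * (\<Sum>i\<in>I. \<Sum>j\<in>I. w i j * M i j) = (\<Sum>i\<in>I. \<Sum>j\<in>I. w i j * (M i j + M j i))"
proof -
  have "(\<Sum>i\<in>I. \<Sum>j\<in>I. w i j * M i j) = (\<Sum>j\<in>I. \<Sum>i\<in>I. w i j * M i j)"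
    by (rule sum.swap)
  also have "\<dots> = (\<Sum>i\<in>I. \<Sum>j\<in>I. w i j * M j i)"
    by (rule sum.cong[OF refl], rule sum.cong[OF refl]) (simp add: assms(1)[of _ "_"])
  finally have "(\<Sum>i\<in>I. \<Sum>j\<in>I. w i j * M i j) = (\<Sum>i\<in>I. \<Sum>j\<in>I. w i j * M j i)" .
  then show ?thesis unfolding mult_2 distrib_left sum.distrib by simp
qed

lemma C_sq:
  assumes "p < 2^(n div 2)" "q < 2^(n div 2)"
  shows "(\<Sum>l<2^(n div 2). cliffx n x p l * cliffx n x l q)
         = - complex_of_real (sqnorm n x) * (if p = q then 1 else 0)"
proof -
  define N where "N = (2::nat)^(n div 2)"
  define M where "M j j' = (\<Sum>l<N. cliff n j p l * cliff n j' l q)" for j j'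
  define w where "w j j' = complex_of_real (x j) * complex_of_real (x j')" for j j'
  have "(\<Sum>l<N. cliffx n x p l * cliffx n x l q)
     = (\<Sum>l<N. \<Sum>j=1..n. \<Sum>j'=1..n. w j j' * (cliff n j p l * cliff n j' l q))"
    unfolding cliffx_def sum_product by (simp add: w_def mult_ac)
  also have "\<dots> = (\<Sum>j=1..n. \<Sum>j'=1..n. w j j' * M j j')"
    unfolding M_def by (simp add: sum_distrib_left sum.swap[of _ "{..<N}"])
  finally have e1: "(\<Sum>l<N. cliffx n x p l * cliffx n x l q) = (\<Sum>j=1..n. \<Sum>j'=1..n. w j j' * M j j')" .
  have "2 * (\<Sum>j=1..n. \<Sum>j'=1..n. w j j' * M j j')
        = (\<Sum>j=1..n. \<Sum>j'=1..n. w j j' * (M j j' + M j' j))"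
    by (rule sym_sum) (auto simp: w_def)
  also have "\<dots> = (\<Sum>j=1..n. \<Sum>j'=1..n. if j' = j then w j j * (-2 * (if p = q then 1 else 0)) else 0)"
  proof (rule sum.cong[OF refl], rule sum.cong[OF refl])
    fix j j' assume "j \<in> {1..n}" "j' \<in> {1..n}"
    then show "w j j' * (M j j' + M j' j) = (if j' = j then w j j * (-2 * (if p = q then 1 else 0)) else 0)"
    proof (cases "j' = j")
      case True
      have "M j j = - (if p = q then 1 else 0)" unfolding M_def N_def
        using cliff_sq[of j n p q] assms \<open>j \<in> _\<close> by simp
      then show ?thesis using True by simp
    next
      case False
      have "M j j' = - M j' j" unfolding M_def N_def
        using cliff_anti[of j n j' p q] assms \<open>j \<in> _\<close> \<open>j' \<in> _\<close> False by simp
      then show ?thesis using False by simp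
    qed
  qed
  also have "\<dots> = (\<Sum>j=1..n. w j j * (-2 * (if p = q then 1 else 0)))"
    by (simp add: sum.delta)
  also have "\<dots> = 2 * (- complex_of_real (sqnorm n x) * (if p = q then 1 else 0))"
  proof -
    have "(\<Sum>j=1..n. w j j * (-2 * (if p = q then 1 else 0)))
          = (\<Sum>j=1..n. w j j) * (-2 * (if p = q then 1 else 0))"
      by (simp only: sum_distrib_right)
    moreover have "(\<Sum>j=1..n. w j j) = complex_of_real (sqnorm n x)"
      by (simp add: sqnorm_def w_def power2_eq_square)
    ultimately show ?thesis by simp
  qed
  finally have "2 * (\<Sum>j=1..n. \<Sum>j'=1..n. w j j' * M j j') = 2 * (- complex_of_real (sqnorm n x) * (if p = q then 1 else 0))" .
  then have "(\<Sum>j=1..n. \<Sum>j'=1..n. w j j' * M j j') = - complex_of_real (sqnorm n x) * (if p = q then 1 else 0)"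
    by (rule mult_left_cancel[THEN iffD1, rotated]) simp
  with e1 show ?thesis unfolding N_def by (rule trans)
qed


lemma swap3: "(\<Sum>i\<in>A. \<Sum>l\<in>B. \<Sum>l'\<in>C. F i l l') = (\<Sum>l\<in>B. \<Sum>l'\<in>C. \<Sum>i\<in>A. F i l l')"
proof -
  have "(\<Sum>i\<in>A. \<Sum>l\<in>B. \<Sum>l'\<in>C. F i l l') = (\<Sum>l\<in>B. \<Sum>i\<in>A. \<Sum>l'\<in>C. F i l l')"
    by (rule sum.swap)
  also have "\<dots> = (\<Sum>l\<in>B. \<Sum>l'\<in>C. \<Sum>i\<in>A. F i l l')"
    by (rule sum.cong[OF refl]) (rule sum.swap)
  finally show ?thesis .
qed

lemma b_norm:
  fixes n :: nat and x :: "nat \<Rightarrow> real" and a :: cvec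
  defines "N \<equiv> (2::nat)^(n div 2)"
  shows "(\<Sum>i<N. mvec N (cliffx n x) a i * cnj (mvec N (cliffx n x) a i))
       = complex_of_real (sqnorm n x) * (\<Sum>i<N. a i * cnj (a i))"
proof -
  let ?C = "cliffx n x"
  have "(\<Sum>i<N. mvec N ?C a i * cnj (mvec N ?C a i))
      = (\<Sum>i<N. \<Sum>l<N. \<Sum>l'<N. (a l * cnj (a l')) * (?C i l * cnj (?C i l')))"
    unfolding mvec_def cnj_sum sum_product by (simp add: mult_ac)
  also have "\<dots> = (\<Sum>i<N. \<Sum>l<N. \<Sum>l'<N. (a l * cnj (a l')) * (- (?C l' i * ?C i l)))"
    by (intro sum.cong refl) (simp add: C_skew[of _ n, folded N_def] mult_ac)
  also have "\<dots> = (\<Sum>l<N. \<Sum>l'<N. \<Sum>i<N. (a l * cnj (a l')) * (- (?C l' i * ?C i l)))"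
    by (rule swap3)
  also have "\<dots> = (\<Sum>l<N. \<Sum>l'<N. (a l * cnj (a l')) * (- (\<Sum>i<N. ?C l' i * ?C i l)))"
    by (simp add: sum_distrib_left sum_negf)
  also have "\<dots> = (\<Sum>l<N. \<Sum>l'<N. (a l * cnj (a l')) * (complex_of_real (sqnorm n x) * (if l' = l then 1 else 0)))"
    by (intro sum.cong refl) (simp add: C_sq[of _ n, folded N_def])
  also have "\<dots> = (\<Sum>l<N. \<Sum>l'<N. if l' = l then (a l * cnj (a l)) * complex_of_real (sqnorm n x) else 0)"
    by (intro sum.cong refl) auto
  also have "\<dots> = (\<Sum>l<N. (a l * cnj (a l)) * complex_of_real (sqnorm n x))"
    by (simp add: sum.delta sum.delta')
  finally show ?thesis by (simp add: sum_distrib_left mult_ac)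
qed

lemma h_imag:
  fixes n :: nat and x :: "nat \<Rightarrow> real" and a :: cvec
  defines "N \<equiv> (2::nat)^(n div 2)"
  shows "cnj (\<Sum>i<N. mvec N (cliffx n x) a i * cnj (a i))
       = - (\<Sum>i<N. mvec N (cliffx n x) a i * cnj (a i))"
proof -
  let ?C = "cliffx n x"
  have "cnj (\<Sum>i<N. mvec N ?C a i * cnj (a i)) = (\<Sum>i<N. \<Sum>l<N. cnj (?C i l) * cnj (a l) * a i)"
    unfolding mvec_def by (simp add: sum_distrib_right)
  also have "\<dots> = (\<Sum>i<N. \<Sum>l<N. - (?C l i * a i * cnj (a l)))"
    by (intro sum.cong refl) (simp add: C_skew[of _ n, folded N_def] mult_ac)
  also have "\<dots> = (\<Sum>l<N. \<Sum>i<N. - (?C l i * a i * cnj (a l)))"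
    by (rule sum.swap)
  also have "\<dots> = - (\<Sum>i<N. mvec N ?C a i * cnj (a i))"
    unfolding mvec_def by (simp add: sum_distrib_right sum_negf)
  finally show ?thesis .
qed


lemma zeta_t_eq: "zeta_t n a = (\<Sum>p<2^(n div 2). a p * cnj (a p))"
proof -
  have "mvec (2^(n div 2)) (\<lambda>p q. \<i> * cliff0 n p q) a p = - a p" if "p < 2^(n div 2)" for p
  proof -
    have "mvec (2^(n div 2)) (\<lambda>p q. \<i> * cliff0 n p q) a p = (\<Sum>l<2^(n div 2). if p = l then - a l else 0)"
      unfolding mvec_def by (intro sum.cong refl) (auto simp: cliff0_def)
    then show ?thesis using that by simp
  qed
  then show ?thesis unfolding zeta_t_def herm_def by (simp add: sum_negf)
qed

lemma zeta_sum:
  "(\<Sum>j=1..n. complex_of_real (x j) * (\<Sum>p<2^(n div 2). mvec (2^(n div 2)) (cliff n j) a p * cnj (a p)))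
   = (\<Sum>p<2^(n div 2). mvec (2^(n div 2)) (cliffx n x) a p * cnj (a p))"
proof -
  define N where "N = (2::nat)^(n div 2)"
  have "(\<Sum>j=1..n. complex_of_real (x j) * (\<Sum>p<N. mvec N (cliff n j) a p * cnj (a p)))
     = (\<Sum>j=1..n. \<Sum>p<N. \<Sum>l<N. complex_of_real (x j) * cliff n j p l * a l * cnj (a p))"
    unfolding mvec_def by (simp add: sum_distrib_left sum_distrib_right mult_ac)
  also have "\<dots> = (\<Sum>p<N. \<Sum>l<N. \<Sum>j=1..n. complex_of_real (x j) * cliff n j p l * a l * cnj (a p))"
    by (rule swap3)
  also have "\<dots> = (\<Sum>p<N. mvec N (cliffx n x) a p * cnj (a p))"
    unfolding mvec_def cliffx_def by (simp add: sum_distrib_left sum_distrib_right mult_ac)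
  finally show ?thesis unfolding N_def .
qed

lemma zeta_sp_eq: "zeta_sp n a j = \<i> * (\<Sum>p<2^(n div 2). mvec (2^(n div 2)) (cliff n j) a p * cnj (a p))"
  unfolding zeta_sp_def herm_def mvec_def by (simp add: sum_distrib_left sum_distrib_right mult_ac)


theorem proposition2p3:
  fixes n :: nat and k :: real and a :: "nat \<Rightarrow> complex" and x :: "nat \<Rightarrow> real"
  assumes "n \<ge> 2" and "k > 0"
    and "k^2 * sqnorm n x < 1"
  shows "complex_of_real (spinor_sqnorm n (killing_spinor n k a x))
           = - 2 * complex_of_real k * lorentz_zeta n k x a"
proof -
  define N where "N = (2::nat)^(n div 2)"
  define s where "s = sqnorm n x"
  define D where "D = 1 - k^2 * s"
  define r where "r = sqrt (2 / D)"
  define b where "b = mvec N (cliffx n x) a"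
  define A where "A = (\<Sum>i<N. a i * cnj (a i))"
  define B where "B = (\<Sum>i<N. b i * cnj (b i))"
  define h where "h = (\<Sum>i<N. b i * cnj (a i))"
  have D: "D > 0" using assms(3) by (simp add: D_def s_def)
  have r2: "r^2 = 2 / D" using D by (simp add: r_def)
  have BA: "B = complex_of_real s * A"
    unfolding B_def A_def b_def s_def N_def by (rule b_norm)
  have hc: "cnj h = - h"
    unfolding h_def b_def N_def by (rule h_imag)
  have hc': "(\<Sum>i<N. a i * cnj (b i)) = - h"
  proof -
    have "(\<Sum>i<N. a i * cnj (b i)) = cnj h" by (simp add: h_def mult_ac)
    then show ?thesis using hc by simp
  qed
  have phi: "killing_spinor n k a x i = complex_of_real r * (a i - \<i> * complex_of_real k * b i)" for i
    by (simp add: killing_spinor_def r_def D_def s_def b_def N_def)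
  have "complex_of_real (spinor_sqnorm n (killing_spinor n k a x))
      = (\<Sum>i<N. killing_spinor n k a x i * cnj (killing_spinor n k a x i))"
    unfolding spinor_sqnorm_def of_real_sum N_def by (intro sum.cong refl) (rule complex_norm_square)
  also have "\<dots> = (\<Sum>i<N. complex_of_real (r^2) * (a i * cnj (a i) + \<i> * complex_of_real k * (a i * cnj (b i))
        - \<i> * complex_of_real k * (b i * cnj (a i)) + complex_of_real (k^2) * (b i * cnj (b i))))"
  proof (intro sum.cong refl)
    fix i
    have ii: "\<i> * \<i> = -1" by simp
    show "killing_spinor n k a x i * cnj (killing_spinor n k a x i) =
      complex_of_real (r^2) * (a i * cnj (a i) + \<i> * complex_of_real k * (a i * cnj (b i))
        - \<i> * complex_of_real k * (b i * cnj (a i)) + complex_of_real (k^2) * (b i * cnj (b i)))"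
      unfolding phi by (simp add: algebra_simps power2_eq_square)
  qed
  also have "\<dots> = complex_of_real (r^2) * (A + \<i> * complex_of_real k * (\<Sum>i<N. a i * cnj (b i))
        - \<i> * complex_of_real k * h + complex_of_real (k^2) * B)"
  proof -
    have e: "(\<Sum>i<N. a i * cnj (a i) + \<i> * complex_of_real k * (a i * cnj (b i))
        - \<i> * complex_of_real k * (b i * cnj (a i)) + complex_of_real (k^2) * (b i * cnj (b i)))
      = A + \<i> * complex_of_real k * (\<Sum>i<N. a i * cnj (b i))
        - \<i> * complex_of_real k * h + complex_of_real (k^2) * B"
      by (simp add: A_def B_def h_def sum.distrib sum_subtractf sum_distrib_left)
    show ?thesis by (subst sum_distrib_left[symmetric]) (simp only: e)
  qed
  also have "\<dots> = complex_of_real (2 / D) * (A - 2 * \<i> * complex_of_real k * h + complex_of_real (k^2 * s) * A)"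
    by (simp add: hc' BA r2 algebra_simps)
  finally have L: "complex_of_real (spinor_sqnorm n (killing_spinor n k a x))
      = complex_of_real (2 / D) * (A - 2 * \<i> * complex_of_real k * h + complex_of_real (k^2 * s) * A)" .
  have Z1: "(\<Sum>j=1..n. complex_of_real (hyp_space n k x j) * zeta_sp n a j)
      = complex_of_real (2 / D) * \<i> * h"
  proof -
    have "(\<Sum>j=1..n. complex_of_real (hyp_space n k x j) * zeta_sp n a j)
       = (\<Sum>j=1..n. complex_of_real (2 / D) * \<i> * (complex_of_real (x j) *
            (\<Sum>p<N. mvec N (cliff n j) a p * cnj (a p))))"
      by (intro sum.cong refl) (simp add: hyp_space_def zeta_sp_eq D_def s_def N_def)
    also have "\<dots> = complex_of_real (2 / D) * \<i> * (\<Sum>j=1..n. complex_of_real (x j) *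
            (\<Sum>p<N. mvec N (cliff n j) a p * cnj (a p)))"
      by (rule sum_distrib_left[symmetric])
    also have "\<dots> = complex_of_real (2 / D) * \<i> * h"
      unfolding h_def b_def N_def zeta_sum ..
    finally show ?thesis .
  qed
  have Z2: "zeta_t n a = A" by (simp add: zeta_t_eq A_def N_def)
  have R: "lorentz_zeta n k x a = complex_of_real (2 / D) * \<i> * h
       - complex_of_real ((1 + k^2 * s) / (k * D)) * A"
    unfolding lorentz_zeta_def Z1 Z2 by (simp add: hyp_time_def D_def s_def)
  show ?thesis unfolding L R using D assms(2)
    by (simp add: field_simps)
qed

end
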